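(* Let $n\geq 4$ and let $P$ be a convex $n$-gon with vertices labelled $0,1,\dots,n-1$ in cyclic order (indices taken modulo $n$). Let $a$ be a fixed vertex of $P$ and let $m$ be an integer with $0\leq m\leq n-3$. Then the number of triangulations of $P$ that use none of the $m$ diagonals $a(a+2), a(a+3),\dots, a(a+m+1)$ is \[\sum_{i=0}^{n-3-m} C_i C_{n-3-i},\] where $C_k=\frac{1}{k+1}\binom{2k}{k}$ is the $k$th Catalan number.
   Context: A triangulation of a convex polygon uses non-crossing diagonals to divide it into triangles. *)

theory Defs
  imports Main
begin

text \<open>Combinatorial model of a convex n-gon with vertices 0,...,n-1 in cyclic order.
  A diagonal is a 2-element set of non-adjacent vertices.\<close>

definition is_diagonal :: "nat \<Rightarrow> nat set \<Rightarrow> bool" where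
  "is_diagonal n d \<longleftrightarrow> (\<exists>i j. d = {i, j} \<and> i < j \<and> j < n \<and> j \<noteq> i + 1 \<and> \<not> (i = 0 \<and> j = n - 1))"

text \<open>Two diagonals cross iff their endpoints strictly interleave in the cyclic order
  (for a convex polygon this is exactly crossing in the interior).\<close>

definition crossing :: "nat set \<Rightarrow> nat set \<Rightarrow> bool" where
  "crossing d e \<longleftrightarrow> (\<exists>i j k l. d = {i, j} \<and> e = {k, l} \<and> i < k \<and> k < j \<and> j < l)
                    \<or> (\<exists>i j k l. e = {i, j} \<and> d = {k, l} \<and> i < k \<and> k < j \<and> j < l)"

definition noncrossing :: "nat \<Rightarrow> nat set set \<Rightarrow> bool" where
  "noncrossing n T \<longleftrightarrow> (\<forall>d\<in>T. is_diagonal n d) \<and> (\<forall>d\<in>T. \<forall>e\<in>T. \<not> crossing d e)"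

text \<open>A triangulation: a maximal set of pairwise non-crossing diagonals
  (these are exactly the diagonal sets dividing the convex polygon into triangles).\<close>

definition triangulation :: "nat \<Rightarrow> nat set set \<Rightarrow> bool" where
  "triangulation n T \<longleftrightarrow> noncrossing n T \<and>
     (\<forall>d. is_diagonal n d \<and> d \<notin> T \<longrightarrow> \<not> noncrossing n (insert d T))"

definition catalan :: "nat \<Rightarrow> nat" where
  "catalan k = ((2 * k) choose k) div (k + 1)"

end

theory Submission
  imports Defs "HOL-Computational_Algebra.Formal_Power_Series"
begin


lemma cat_dvd0: "(k+1) * ((2*k) choose (k+1)) = k * ((2*k) choose k)"
proof (cases k)
  case 0 then show ?thesis by simp
next
  case (Suc j)
  have h1: "fact (k+1) * fact (2*k - (k+1)) * ((2*k) choose (k+1)) = (fact (2*k) :: nat)"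
    by (rule binomial_fact_lemma) (use Suc in simp)
  have h2: "fact k * fact (2*k - k) * ((2*k) choose k) = (fact (2*k) :: nat)"
    by (rule binomial_fact_lemma) simp
  have e1: "2*k - (k+1) = j" and e2: "2*k-k = k" and e3: "fact (k+1) = (k+1) * (fact k::nat)"
    and e4: "fact k = k * (fact j :: nat)" using Suc by simp_all
  have "(fact k * fact j) * ((k+1) * ((2*k) choose (k+1))) = (fact k * fact j) * (k * ((2*k) choose k))"
    using h1 h2 unfolding e1 e2 e3 by (metis (no_types, lifting) e4 mult.assoc mult.left_commute)
  moreover have nz: "fact k * fact j \<noteq> (0::nat)" by simp
  ultimately show ?thesis by (simp only: mult_left_cancel[OF nz])
qed

lemma cat_dvd: "(k+1) * (((2*k) choose k) - ((2*k) choose (k+1))) = (2*k) choose k"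
proof -
  have "(k+1) * (((2*k) choose k) - ((2*k) choose (k+1))) = (k+1) * ((2*k) choose k) - k * ((2*k) choose k)"
    using cat_dvd0[of k] by (simp add: diff_mult_distrib2)
  also have "\<dots> = (2*k) choose k" by (simp add: algebra_simps)
  finally show ?thesis .
qed

lemma cat_real: "real (catalan k) = real ((2*k) choose k) / real (k+1)"
proof -
  have "catalan k = ((2*k) choose k) - ((2*k) choose (k+1))"
    unfolding catalan_def using cat_dvd[of k] by (metis nonzero_mult_div_cancel_left add_eq_0_iff_both_eq_0 one_neq_zero)
  hence "real (k+1) * real (catalan k) = real ((2*k) choose k)"
    using cat_dvd[of k] by (metis of_nat_mult)
  thus ?thesis by (simp add: field_simps)
qed

lemma central_rec0: "(k+1) * ((2*k+2) choose (k+1)) = 2*(2*k+1) * ((2*k) choose k)"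
proof -
  have h1: "fact (k+1) * fact ((2*k+2) - (k+1)) * ((2*k+2) choose (k+1)) = (fact (2*k+2) :: nat)"
    by (rule binomial_fact_lemma) simp
  have h2: "fact k * fact (2*k - k) * ((2*k) choose k) = (fact (2*k) :: nat)"
    by (rule binomial_fact_lemma) simp
  have e1: "(2*k+2) - (k+1) = k+1" and e2: "2*k-k = k" and e3: "fact (k+1) = (k+1) * (fact k::nat)"
    and e4: "fact (2*k+2) = (2*k+2)*(2*k+1)*(fact (2*k)::nat)" by (simp_all add: algebra_simps)
  have "((k+1) * fact k * fact k) * ((k+1) * ((2*k+2) choose (k+1))) = ((k+1) * fact k * fact k) * (2*(2*k+1) * ((2*k) choose k))"
  proof -
    have "((k+1) * fact k * fact k) * ((k+1) * ((2*k+2) choose (k+1))) = fact (k+1) * fact (k+1) * ((2*k+2) choose (k+1))"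
      unfolding e3 by (simp only: mult_ac)
    also have "\<dots> = (2*k+2)*(2*k+1)*(fact k * fact k * ((2*k) choose k))" using h1 h2 unfolding e1 e2 e4 by simp
    also have "\<dots> = ((k+1) * fact k * fact k) * (2*(2*k+1) * ((2*k) choose k))" by (simp add: algebra_simps)
    finally show ?thesis .
  qed
  moreover have nz: "(k+1) * fact k * fact k \<noteq> (0::nat)" by simp
  ultimately show ?thesis by (simp only: mult_left_cancel[OF nz])
qed

lemma cat_rec_real: "real (catalan (Suc k)) = real (catalan k) * (2*(2*k+1)) / (k+2)"
proof -
  define X where "X = real ((2*k+2) choose (k+1))"
  define Y where "Y = real ((2*k) choose k)"
  have e: "2 * Suc k = 2*k+2" "Suc k + 1 = k+2" by simp_all
  have a: "real (catalan (Suc k)) = X / real (k+2)"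
    using cat_real[of "Suc k"] unfolding X_def e by (simp only: Suc_eq_plus1)
  have b0: "real (k+1) * X = 2*(2*k+1) * Y"
    using arg_cong[OF central_rec0[of k], of real] unfolding X_def Y_def
    by (simp only: of_nat_mult of_nat_add of_nat_numeral of_nat_1)
  have c: "real (catalan k) = Y / real (k+1)" unfolding Y_def by (rule cat_real)
  have b: "X = 2*(2*k+1)*Y / real (k+1)" using b0 by (simp add: field_simps)
  show ?thesis unfolding a c b by (simp add: field_simps)
qed

definition g :: "nat \<Rightarrow> real" where "g k = ((1/2::real) gchoose k) * (-4)^k"

lemma gch_rec: "((a::real) gchoose Suc k) * real (Suc k) = (a gchoose k) * (a - real k)"
proof -
  have "(a gchoose Suc k) * fact (Suc k) = (\<Prod>i = 0..<Suc k. a - of_nat i)" by (rule gbinomial_mult_fact')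
  also have "\<dots> = (\<Prod>i = 0..<k. a - of_nat i) * (a - real k)" by simp
  also have "\<dots> = (a gchoose k) * fact k * (a - real k)" by (simp add: gbinomial_mult_fact')
  finally have "fact k * ((a gchoose Suc k) * real (Suc k)) = fact k * ((a gchoose k) * (a - real k))"
    by (simp only: fact_Suc of_nat_mult mult_ac)
  moreover have nz: "fact k \<noteq> (0::real)" by simp
  ultimately show ?thesis by (simp only: mult_left_cancel[OF nz])
qed

lemma g_Suc: "g (Suc k) = -2 * real (catalan k)"
proof (induction k)
  case 0 then show ?case by (simp add: g_def catalan_def)
next
  case (Suc k)
  have h: "((1/2::real) gchoose Suc (Suc k)) * real (Suc (Suc k)) = ((1/2) gchoose Suc k) * (1/2 - real (Suc k))"
    by (rule gch_rec)
  have "g (Suc (Suc k)) * real (Suc (Suc k)) = (((1/2::real) gchoose Suc (Suc k)) * real (Suc (Suc k))) * ((-4)^(Suc k) * (-4))"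
    unfolding g_def by (simp only: power_Suc2 mult_ac)
  also have "\<dots> = g (Suc k) * (1/2 - real (Suc k)) * (-4)"
    unfolding h g_def by (simp only: mult_ac)
  finally have "g (Suc (Suc k)) = g (Suc k) * (1/2 - real (Suc k)) * (-4) / real (Suc (Suc k))"
    by (simp add: field_simps)
  thus ?case unfolding Suc cat_rec_real by (simp add: field_simps)
qed

lemma g_conv: "N \<ge> 2 \<Longrightarrow> (\<Sum>k=0..N. g k * g (N-k)) = 0"
proof -
  assume N: "N \<ge> 2"
  have "(\<Sum>k=0..N. g k * g (N-k)) = (\<Sum>k=0..N. ((1/2::real) gchoose k) * ((1/2) gchoose (N-k))) * (-4)^N"
    unfolding g_def sum_distrib_right
    by (rule sum.cong) (auto simp: power_add[symmetric])
  also have "\<dots> = ((1::real) gchoose N) * (-4)^N" by (subst gbinomial_Vandermonde) simp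
  also have "(1::real) gchoose N = 0"
  proof -
    have "(1::real) gchoose N = real (1 choose N)" by (metis binomial_gbinomial of_nat_1)
    also have "1 choose N = 0" using N by simp
    finally show ?thesis by simp
  qed
  finally show ?thesis by simp
qed

lemma catalan_rec: "catalan (Suc q) = (\<Sum>i=0..q. catalan i * catalan (q-i))"
proof -
  have "(\<Sum>k=0..q+2. g k * g (q+2-k)) = 0" by (rule g_conv) simp
  moreover have "(\<Sum>k=0..q+2. g k * g (q+2-k)) = g 0 * g (q+2) + (\<Sum>k=1..q+2. g k * g (q+2-k))"
    by (simp add: sum.atLeast_Suc_atMost)
  moreover have "(\<Sum>k=1..q+2. g k * g (q+2-k)) = (\<Sum>k=1..q+1. g k * g (q+2-k)) + g (q+2) * g 0"
    by simp
  moreover have "(\<Sum>k=1..q+1. g k * g (q+2-k)) = (\<Sum>i=0..q. g (Suc i) * g (Suc (q-i)))"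
    by (rule sum.reindex_bij_witness[of _ Suc "\<lambda>k. k - 1"]) (auto simp: Suc_diff_le)
  moreover have "\<dots> = 4 * (\<Sum>i=0..q. real (catalan i * catalan (q-i)))"
    by (simp add: g_Suc sum_distrib_left)
  moreover have "g 0 = 1" by (simp add: g_def)
  moreover have "g (q+2) = -2 * real (catalan (Suc q))" using g_Suc[of "Suc q"] by simp
  ultimately have "real (catalan (Suc q)) = (\<Sum>i=0..q. real (catalan i * catalan (q-i)))"
    by simp
  thus ?thesis by (metis of_nat_eq_iff of_nat_sum)
qed



lemma cross_sym: "crossing d e = crossing e d" unfolding crossing_def by blast

lemma cross_iff: "i < j \<Longrightarrow> k < l \<Longrightarrow> crossing {i,j} {k,l} \<longleftrightarrow> (i<k \<and> k<j \<and> j<l) \<or> (k<i \<and> i<l \<and> l<j)"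
proof
  assume a: "i < j" "k < l" "crossing {i,j} {k,l}"
  then show "(i<k \<and> k<j \<and> j<l) \<or> (k<i \<and> i<l \<and> l<j)"
    unfolding crossing_def
    apply (elim disjE exE conjE)
    apply (simp_all only: doubleton_eq_iff)
    apply (elim disjE conjE; simp; linarith)+
    done
next
  assume "(i<k \<and> k<j \<and> j<l) \<or> (k<i \<and> i<l \<and> l<j)"
  then show "crossing {i,j} {k,l}" unfolding crossing_def
    apply (elim disjE)
    apply (rule disjI1, rule exI[where x=i], rule exI[where x=j], rule exI[where x=k], rule exI[where x=l], simp)
    apply (rule disjI2, rule exI[where x=k], rule exI[where x=l], rule exI[where x=i], rule exI[where x=j], simp)
    done
qed

lemma cross_irrefl: "\<not> crossing d d"
  unfolding crossing_def
  apply (rule notI)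
  apply (elim disjE exE conjE)
   apply (simp_all only: doubleton_eq_iff)
   apply (elim disjE conjE; simp; linarith)+
  done

lemma dbl_eq: "(i::nat)<j \<Longrightarrow> k<l \<Longrightarrow> {i,j} = {k,l} \<Longrightarrow> i=k \<and> j=l"
  by (metis doubleton_eq_iff order_less_asym)

lemma noncross: "i<j \<Longrightarrow> k<l \<Longrightarrow> (j \<le> k \<or> l \<le> i \<or> (i \<le> k \<and> l \<le> j) \<or> (k \<le> i \<and> j \<le> l)) \<Longrightarrow> \<not> crossing {i,j} {k,l}"
  by (simp add: cross_iff) linarith

definition dg :: "nat \<Rightarrow> nat \<Rightarrow> nat set \<Rightarrow> bool" where
  "dg lo hi d \<longleftrightarrow> (\<exists>i j. d = {i,j} \<and> lo \<le> i \<and> i < j \<and> j \<le> hi \<and> j \<noteq> i+1 \<and> \<not>(i = lo \<and> j = hi))"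

definition nc :: "nat \<Rightarrow> nat \<Rightarrow> nat set set \<Rightarrow> bool" where
  "nc lo hi T \<longleftrightarrow> (\<forall>d\<in>T. dg lo hi d) \<and> (\<forall>d\<in>T. \<forall>e\<in>T. \<not> crossing d e)"

definition tri :: "nat \<Rightarrow> nat \<Rightarrow> nat set set \<Rightarrow> bool" where
  "tri lo hi T \<longleftrightarrow> nc lo hi T \<and> (\<forall>d. dg lo hi d \<and> d \<notin> T \<longrightarrow> (\<exists>e\<in>T. crossing d e))"

lemma tri_conv: "n \<ge> 1 \<Longrightarrow> triangulation n T \<longleftrightarrow> tri 0 (n-1) T"
proof -
  assume n: "n \<ge> 1"
  have dgc: "is_diagonal n d \<longleftrightarrow> dg 0 (n-1) d" for d
    unfolding is_diagonal_def dg_def using n by (metis (no_types, lifting) Suc_pred' less_Suc_eq_le le_zero_eq less_one not_le zero_le)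
  have ncc: "noncrossing n T \<longleftrightarrow> nc 0 (n-1) T" for T
    unfolding noncrossing_def nc_def dgc ..
  show ?thesis unfolding triangulation_def tri_def ncc
    unfolding nc_def using cross_sym cross_irrefl by (auto simp: dgc)
qed

lemma dg_sub: "dg lo hi d \<Longrightarrow> d \<subseteq> {lo..hi}"
  unfolding dg_def by auto

definition A :: "nat \<Rightarrow> nat \<Rightarrow> nat \<Rightarrow> nat set set" where
  "A lo hi c = (if c = lo+1 then {} else {{lo,c}}) \<union> (if c+1 = hi then {} else {{c,hi}})"

definition ap :: "nat \<Rightarrow> nat \<Rightarrow> nat \<Rightarrow> nat set set \<Rightarrow> bool" where
  "ap lo hi c T \<longleftrightarrow> lo < c \<and> c < hi \<and> A lo hi c \<subseteq> T"


lemma split_dg: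
  assumes "lo < c" "c < hi" "dg lo hi d"
    and x1: "c \<noteq> lo+1 \<Longrightarrow> \<not> crossing d {lo,c}" and x2: "c+1 \<noteq> hi \<Longrightarrow> \<not> crossing d {c,hi}"
  shows "dg lo c d \<or> dg c hi d \<or> d \<in> A lo hi c"
proof -
  obtain i j where d: "d = {i,j}" "lo \<le> i" "i < j" "j \<le> hi" "j \<noteq> i+1" "\<not>(i = lo \<and> j = hi)"
    using assms(3) unfolding dg_def by blast
  consider "j \<le> c" | "c \<le> i" | "i < c" "c < j" by linarith
  then show ?thesis
  proof cases
    case 1
    show ?thesis
    proof (cases "i = lo \<and> j = c")
      case True then show ?thesis using d unfolding A_def by auto
    next
      case False then show ?thesis using d 1 unfolding dg_def by blast
    qed
  next
    case 2
    show ?thesis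
    proof (cases "i = c \<and> j = hi")
      case True then show ?thesis using d unfolding A_def by auto
    next
      case False then show ?thesis using d 2 assms(1) unfolding dg_def by (metis le_trans less_imp_le_nat)
    qed
  next
    case 3
    show ?thesis
    proof (cases "i = lo")
      case False
      hence "c \<noteq> lo+1" "lo < i" using d 3 by auto
      hence "crossing d {lo,c}" using d 3 assms by (simp add: cross_iff)
      then show ?thesis using x1 \<open>c \<noteq> lo+1\<close> by blast
    next
      case True
      hence "j < hi" "c+1 \<noteq> hi" using d 3 by auto
      hence "crossing d {c,hi}" using d 3 assms True by (simp add: cross_iff)
      then show ?thesis using x2 \<open>c+1 \<noteq> hi\<close> by blast
    qed
  qed
qed

lemma dgE: assumes "dg lo hi d"
  obtains i j where "d = {i,j}" "lo \<le> i" "i < j" "j \<le> hi" "j \<noteq> i+1" "\<not>(i = lo \<and> j = hi)"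
  using assms unfolding dg_def by blast

lemma AE: assumes "e \<in> A lo hi c"
  obtains "e = {lo,c}" "c \<noteq> lo+1" | "e = {c,hi}" "c+1 \<noteq> hi"
  using assms unfolding A_def by (auto split: if_splits)

lemma A_dg: "lo < c \<Longrightarrow> c < hi \<Longrightarrow> d \<in> A lo hi c \<Longrightarrow> dg lo hi d"
proof -
  assume a: "lo < c" "c < hi" "d \<in> A lo hi c"
  from a(3) show ?thesis
  proof (cases rule: AE)
    case 1 then show ?thesis unfolding dg_def using a by (intro exI[where x=lo] exI[where x=c]) simp
  next
    case 2 then show ?thesis unfolding dg_def using a by (intro exI[where x=c] exI[where x=hi]) simp
  qed
qed

lemma dg12: "dg lo c d \<Longrightarrow> dg c hi e \<Longrightarrow> \<not> crossing d e"
proof -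
  assume "dg lo c d" "dg c hi e"
  then obtain i j k l where "d = {i,j}" "i<j" "j \<le> c" "e = {k,l}" "k < l" "c \<le> k"
    by (metis dgE)
  then show ?thesis using noncross[of i j k l] by simp
qed

lemma dgA1: "lo < c \<Longrightarrow> c < hi \<Longrightarrow> dg lo c d \<Longrightarrow> e \<in> A lo hi c \<Longrightarrow> \<not> crossing d e"
proof -
  assume a: "lo < c" "c < hi" "dg lo c d" "e \<in> A lo hi c"
  then obtain i j where d: "d = {i,j}" "lo \<le> i" "i<j" "j \<le> c" by (metis dgE)
  from a(4) show ?thesis
  proof (cases rule: AE)
    case 1 then show ?thesis using d noncross[of i j lo c] a by simp
  next
    case 2 then show ?thesis using d noncross[of i j c hi] a by simp
  qed
qed

lemma dgA2: "lo < c \<Longrightarrow> c < hi \<Longrightarrow> dg c hi d \<Longrightarrow> e \<in> A lo hi c \<Longrightarrow> \<not> crossing d e"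
proof -
  assume a: "lo < c" "c < hi" "dg c hi d" "e \<in> A lo hi c"
  then obtain i j where d: "d = {i,j}" "c \<le> i" "i<j" "j \<le> hi" by (metis dgE)
  from a(4) show ?thesis
  proof (cases rule: AE)
    case 1 then show ?thesis using d noncross[of i j lo c] a by simp
  next
    case 2 then show ?thesis using d noncross[of i j c hi] a by simp
  qed
qed

lemma AA: "lo < c \<Longrightarrow> c < hi \<Longrightarrow> d \<in> A lo hi c \<Longrightarrow> e \<in> A lo hi c \<Longrightarrow> \<not> crossing d e"
proof -
  assume a: "lo < c" "c < hi" "d \<in> A lo hi c" "e \<in> A lo hi c"
  have x: "\<not> crossing {lo,c} {c,hi}" using noncross[of lo c c hi] a by simp
  from a(3) show ?thesis
  proof (cases rule: AE)
    case 1 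
    from a(4) show ?thesis
      by (cases rule: AE) (use 1 x cross_irrefl in auto)
  next
    case 2
    from a(4) show ?thesis
      by (cases rule: AE) (use 2 x cross_irrefl cross_sym in auto)
  qed
qed

lemma dg12': "dg c hi d \<Longrightarrow> dg lo c e \<Longrightarrow> \<not> crossing d e"
  using dg12 cross_sym by blast
lemma dgA1': "lo < c \<Longrightarrow> c < hi \<Longrightarrow> d \<in> A lo hi c \<Longrightarrow> dg lo c e \<Longrightarrow> \<not> crossing d e"
  using dgA1 cross_sym by blast
lemma dgA2': "lo < c \<Longrightarrow> c < hi \<Longrightarrow> d \<in> A lo hi c \<Longrightarrow> dg c hi e \<Longrightarrow> \<not> crossing d e"
  using dgA2 cross_sym by blast

lemma dg_mono1: "dg lo c d \<Longrightarrow> c < hi \<Longrightarrow> dg lo hi d"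
proof -
  assume "dg lo c d" "c < hi"
  then obtain i j where "d = {i,j}" "lo \<le> i" "i < j" "j \<le> c" "j \<noteq> i+1" by (metis dgE)
  then show ?thesis unfolding dg_def using \<open>c < hi\<close> by (intro exI[where x=i] exI[where x=j]) simp
qed

lemma dg_mono2: "dg c hi d \<Longrightarrow> lo < c \<Longrightarrow> dg lo hi d"
proof -
  assume "dg c hi d" "lo < c"
  then obtain i j where "d = {i,j}" "c \<le> i" "i < j" "j \<le> hi" "j \<noteq> i+1" by (metis dgE)
  then show ?thesis unfolding dg_def using \<open>lo < c\<close> by (intro exI[where x=i] exI[where x=j]) simp
qed

lemma dg12_disj: "dg lo c d \<Longrightarrow> dg c hi d \<Longrightarrow> False"
  using dg_sub by (metis dgE insertI1 insert_commute atLeastAtMost_iff subset_iff order.trans not_le)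

lemma A_not_dg1: "lo < c \<Longrightarrow> c < hi \<Longrightarrow> d \<in> A lo hi c \<Longrightarrow> \<not> dg lo c d"
proof
  assume a: "lo < c" "c < hi" "d \<in> A lo hi c" "dg lo c d"
  then obtain i j where d: "d = {i,j}" "lo \<le> i" "i < j" "j \<le> c" "\<not>(i = lo \<and> j = c)" by (metis dgE)
  from a(3) show False
  proof (cases rule: AE)
    case 1 then show False using d dbl_eq[of i j lo c] a by auto
  next
    case 2 then show False using d dbl_eq[of i j c hi] a by auto
  qed
qed

lemma A_not_dg2: "lo < c \<Longrightarrow> c < hi \<Longrightarrow> d \<in> A lo hi c \<Longrightarrow> \<not> dg c hi d"
proof
  assume a: "lo < c" "c < hi" "d \<in> A lo hi c" "dg c hi d"
  then obtain i j where d: "d = {i,j}" "c \<le> i" "i < j" "j \<le> hi" "\<not>(i = c \<and> j = hi)" by (metis dgE)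
  from a(3) show False
  proof (cases rule: AE)
    case 1 then show False using d dbl_eq[of i j lo c] a by auto
  next
    case 2 then show False using d dbl_eq[of i j c hi] a by auto
  qed
qed


lemma tri_dg: "tri lo hi T \<Longrightarrow> d \<in> T \<Longrightarrow> dg lo hi d"
  unfolding tri_def nc_def by blast

lemma tri_nc: "tri lo hi T \<Longrightarrow> d \<in> T \<Longrightarrow> e \<in> T \<Longrightarrow> \<not> crossing d e"
  unfolding tri_def nc_def by blast

lemma tri_max: "tri lo hi T \<Longrightarrow> dg lo hi d \<Longrightarrow> d \<notin> T \<Longrightarrow> \<exists>e\<in>T. crossing d e"
  unfolding tri_def by blast

lemma A_mem1: "c \<noteq> lo+1 \<Longrightarrow> {lo,c} \<in> A lo hi c" unfolding A_def by simp
lemma A_mem2: "c+1 \<noteq> hi \<Longrightarrow> {c,hi} \<in> A lo hi c" unfolding A_def by simp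

lemma ap_uniq: assumes T: "tri lo hi T" and a: "ap lo hi c T" "ap lo hi c' T" shows "c = c'"
proof -
  have key: False if b: "ap lo hi x T" "ap lo hi y T" "x < y" for x y
  proof -
    have b1: "lo < x" "x < hi" "A lo hi x \<subseteq> T" "lo < y" "y < hi" "A lo hi y \<subseteq> T"
      using b unfolding ap_def by auto
    have "{lo,y} \<in> T" using A_mem1[of y lo hi] b1 b(3) by auto
    moreover have "{x,hi} \<in> T" using A_mem2[of x hi lo] b1 b(3) by auto
    moreover have "crossing {lo,y} {x,hi}" using b1 b(3) by (simp add: cross_iff)
    ultimately show False using tri_nc[OF T] by blast
  qed
  show ?thesis using key[OF a] key[OF a(2) a(1)] by (meson linorder_neqE_nat)
qed

lemma ap_ex: assumes T: "tri lo hi T" and h: "lo+2 \<le> hi" shows "\<exists>c. ap lo hi c T"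
proof -
  define S where "S = {j. lo < j \<and> j < hi \<and> (j = lo+1 \<or> {lo,j} \<in> T)}"
  have fin: "finite S" unfolding S_def by (rule finite_subset[of _ "{..<hi}"]) auto
  have ne: "lo+1 \<in> S" unfolding S_def using h by simp
  define c where "c = Max S"
  have cS: "c \<in> S" unfolding c_def using fin ne Max_in by blast
  have cmax: "y \<le> c" if "y \<in> S" for y unfolding c_def using fin that by simp
  have c1: "lo < c" "c < hi" using cS unfolding S_def by auto
  have h1: "{lo,c} \<in> T" if "c \<noteq> lo+1" using cS that unfolding S_def by auto
  have h2: "{c,hi} \<in> T" if ch: "c+1 \<noteq> hi"
  proof (rule ccontr)
    assume nin: "{c,hi} \<notin> T"
    have "dg lo hi {c,hi}" unfolding dg_def using c1 ch by (intro exI[where x=c] exI[where x=hi]) simp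
    then obtain e where e: "e \<in> T" "crossing {c,hi} e" using tri_max[OF T] nin by blast
    obtain x y where xy: "e = {x,y}" "lo \<le> x" "x < y" "y \<le> hi" using tri_dg[OF T e(1)] by (metis dgE)
    have cr: "x < c" "c < y" "y < hi" using e(2) xy c1 by (auto simp: cross_iff)
    show False
    proof (cases "x = lo")
      case True
      hence "y \<in> S" unfolding S_def using e(1) xy cr c1 by auto
      then show False using cmax cr by fastforce
    next
      case False
      hence "c \<noteq> lo+1" using xy cr by auto
      hence "{lo,c} \<in> T" by (rule h1)
      moreover have "crossing {lo,c} e" using xy cr c1 False by (simp add: cross_iff)
      ultimately show False using tri_nc[OF T] e(1) by blast
    qed
  qed
  have "A lo hi c \<subseteq> T" unfolding A_def using h1 h2 by auto
  then show ?thesis unfolding ap_def using c1 by blast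
qed

lemma ap_elems: assumes T: "tri lo hi T" and a: "ap lo hi c T" and e: "e \<in> T"
  shows "dg lo c e \<or> dg c hi e \<or> e \<in> A lo hi c"
proof -
  have a1: "lo < c" "c < hi" "A lo hi c \<subseteq> T" using a unfolding ap_def by auto
  show ?thesis
  proof (rule split_dg[OF a1(1,2) tri_dg[OF T e]])
    assume "c \<noteq> lo+1" then have "{lo,c} \<in> T" using A_mem1 a1 by blast
    then show "\<not> crossing e {lo,c}" using tri_nc[OF T e] by blast
  next
    assume "c+1 \<noteq> hi" then have "{c,hi} \<in> T" using A_mem2 a1 by blast
    then show "\<not> crossing e {c,hi}" using tri_nc[OF T e] by blast
  qed
qed

lemma restr1: assumes T: "tri lo hi T" and a: "ap lo hi c T"
  shows "tri lo c (T \<inter> Collect (dg lo c))"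
proof -
  have a1: "lo < c" "c < hi" "A lo hi c \<subseteq> T" using a unfolding ap_def by auto
  have "\<exists>e\<in>T \<inter> Collect (dg lo c). crossing d e" if d: "dg lo c d" "d \<notin> T \<inter> Collect (dg lo c)" for d
  proof -
    have "d \<notin> T" using d by auto
    then obtain e where e: "e \<in> T" "crossing d e" using tri_max[OF T dg_mono1[OF d(1) a1(2)]] by blast
    have "dg lo c e" using ap_elems[OF T a e(1)] dg12[OF d(1)] dgA1[OF a1(1,2) d(1)] e(2) by blast
    then show ?thesis using e by blast
  qed
  then show ?thesis unfolding tri_def nc_def using tri_nc[OF T] by blast
qed

lemma restr2: assumes T: "tri lo hi T" and a: "ap lo hi c T"
  shows "tri c hi (T \<inter> Collect (dg c hi))"
proof -
  have a1: "lo < c" "c < hi" "A lo hi c \<subseteq> T" using a unfolding ap_def by auto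
  have "\<exists>e\<in>T \<inter> Collect (dg c hi). crossing d e" if d: "dg c hi d" "d \<notin> T \<inter> Collect (dg c hi)" for d
  proof -
    have "d \<notin> T" using d by auto
    then obtain e where e: "e \<in> T" "crossing d e" using tri_max[OF T dg_mono2[OF d(1) a1(1)]] by blast
    have "\<not> dg lo c e" using dg12[of lo c e hi d] d(1) e(2) cross_sym by blast
    moreover have "e \<notin> A lo hi c" using dgA2[OF a1(1,2) d(1)] e(2) by blast
    ultimately have "dg c hi e" using ap_elems[OF T a e(1)] by blast
    then show ?thesis using e by blast
  qed
  then show ?thesis unfolding tri_def nc_def using tri_nc[OF T] by blast
qed

lemma recomb: assumes T: "tri lo hi T" and a: "ap lo hi c T"
  shows "(T \<inter> Collect (dg lo c)) \<union> (T \<inter> Collect (dg c hi)) \<union> A lo hi c = T"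
  using ap_elems[OF T a] a unfolding ap_def by blast

lemma glue: assumes T1: "tri lo c T1" and T2: "tri c hi T2" and c: "lo < c" "c < hi"
  shows "tri lo hi (T1 \<union> T2 \<union> A lo hi c)" "ap lo hi c (T1 \<union> T2 \<union> A lo hi c)"
    "(T1 \<union> T2 \<union> A lo hi c) \<inter> Collect (dg lo c) = T1"
    "(T1 \<union> T2 \<union> A lo hi c) \<inter> Collect (dg c hi) = T2"
proof -
  let ?U = "T1 \<union> T2 \<union> A lo hi c"
  have cls: "(dg lo c d \<and> d \<in> T1) \<or> (dg c hi d \<and> d \<in> T2) \<or> d \<in> A lo hi c" if "d \<in> ?U" for d
    using that tri_dg[OF T1] tri_dg[OF T2] by blast
  have alldg: "dg lo hi d" if "d \<in> ?U" for d
    using cls[OF that] dg_mono1[OF _ c(2)] dg_mono2[OF _ c(1)] A_dg[OF c] by blast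
  have nocr: "\<not> crossing d e" if "d \<in> ?U" "e \<in> ?U" for d e
  proof -
    show ?thesis
      by (insert cls[OF that(1)] cls[OF that(2)], elim disjE conjE; ((rule tri_nc[OF T1]; assumption) | (rule tri_nc[OF T2]; assumption)
        | (rule dg12; assumption) | (rule dg12'; assumption) | (rule dgA1[OF c]; assumption)
        | (rule dgA1'[OF c]; assumption) | (rule dgA2[OF c]; assumption) | (rule dgA2'[OF c]; assumption)
        | (rule AA[OF c]; assumption)))
  qed
  have mx: "\<exists>e\<in>?U. crossing d e" if d: "dg lo hi d" "d \<notin> ?U" for d
  proof (cases "(c \<noteq> lo+1 \<and> crossing d {lo,c}) \<or> (c+1 \<noteq> hi \<and> crossing d {c,hi})")
    case True then show ?thesis using A_mem1 A_mem2 by blast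
  next
    case False
    then have "dg lo c d \<or> dg c hi d \<or> d \<in> A lo hi c" using split_dg[OF c d(1)] by blast
    then show ?thesis using d(2) tri_max[OF T1, of d] tri_max[OF T2, of d] by blast
  qed
  show "tri lo hi ?U" unfolding tri_def nc_def using alldg nocr mx by blast
  show "ap lo hi c ?U" unfolding ap_def using c by blast
  show "?U \<inter> Collect (dg lo c) = T1"
  proof
    show "?U \<inter> Collect (dg lo c) \<subseteq> T1"
    proof
      fix x assume x: "x \<in> ?U \<inter> Collect (dg lo c)"
      then have "dg lo c x" by simp
      then show "x \<in> T1" using cls[of x] x dg12_disj[of lo c x hi] A_not_dg1[OF c, of x] by blast
    qed
    show "T1 \<subseteq> ?U \<inter> Collect (dg lo c)" using tri_dg[OF T1] by blast
  qed
  show "?U \<inter> Collect (dg c hi) = T2"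
  proof
    show "?U \<inter> Collect (dg c hi) \<subseteq> T2"
    proof
      fix x assume x: "x \<in> ?U \<inter> Collect (dg c hi)"
      then have "dg c hi x" by simp
      then show "x \<in> T2" using cls[of x] x dg12_disj[of lo c x hi] A_not_dg2[OF c, of x] by blast
    qed
    show "T2 \<subseteq> ?U \<inter> Collect (dg c hi)" using tri_dg[OF T2] by blast
  qed
qed

definition Tr :: "nat \<Rightarrow> nat \<Rightarrow> nat set set set" where "Tr lo hi = {T. tri lo hi T}"
definition Tc :: "nat \<Rightarrow> nat \<Rightarrow> nat \<Rightarrow> nat set set set" where "Tc lo hi c = {T. tri lo hi T \<and> ap lo hi c T}"

lemma fin_Tr: "finite (Tr lo hi)"
proof -
  have "Tr lo hi \<subseteq> Pow (Pow {lo..hi})"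
  proof
    fix T assume "T \<in> Tr lo hi"
    then have "tri lo hi T" unfolding Tr_def by simp
    then have "\<forall>d\<in>T. d \<subseteq> {lo..hi}" using tri_dg dg_sub by metis
    then show "T \<in> Pow (Pow {lo..hi})" by blast
  qed
  then show ?thesis by (rule finite_subset) simp
qed

lemma card_Tc: assumes c: "lo < c" "c < hi" shows "card (Tc lo hi c) = card (Tr lo c) * card (Tr c hi)"
proof -
  define f where "f = (\<lambda>T. (T \<inter> Collect (dg lo c), T \<inter> Collect (dg c hi)))"
  define f' where "f' = (\<lambda>(T1::nat set set,T2). T1 \<union> T2 \<union> A lo hi c)"
  have "bij_betw f (Tc lo hi c) (Tr lo c \<times> Tr c hi)"
  proof (rule bij_betw_byWitness[where f'=f'])
    show "\<forall>T\<in>Tc lo hi c. f' (f T) = T"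
    proof
      fix T assume "T \<in> Tc lo hi c"
      then have "tri lo hi T" "ap lo hi c T" unfolding Tc_def by auto
      then show "f' (f T) = T" unfolding f_def f'_def using recomb by simp
    qed
    show "\<forall>p\<in>Tr lo c \<times> Tr c hi. f (f' p) = p"
    proof
      fix p assume "p \<in> Tr lo c \<times> Tr c hi"
      then obtain T1 T2 where p: "p = (T1,T2)" "tri lo c T1" "tri c hi T2" unfolding Tr_def by auto
      show "f (f' p) = p" unfolding f_def f'_def p using glue(3,4)[OF p(2,3) c] by simp
    qed
    show "f ` Tc lo hi c \<subseteq> Tr lo c \<times> Tr c hi"
    proof
      fix x assume "x \<in> f ` Tc lo hi c"
      then obtain T where T: "x = f T" "tri lo hi T" "ap lo hi c T" unfolding Tc_def by auto
      show "x \<in> Tr lo c \<times> Tr c hi" unfolding T(1) f_def Tr_def using restr1[OF T(2,3)] restr2[OF T(2,3)] by simp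
    qed
    show "f' ` (Tr lo c \<times> Tr c hi) \<subseteq> Tc lo hi c"
    proof
      fix x assume "x \<in> f' ` (Tr lo c \<times> Tr c hi)"
      then obtain T1 T2 where T: "x = f' (T1,T2)" "tri lo c T1" "tri c hi T2" unfolding Tr_def by auto
      show "x \<in> Tc lo hi c" unfolding T(1) f'_def Tc_def using glue(1,2)[OF T(2,3) c] by simp
    qed
  qed
  then have "card (Tc lo hi c) = card (Tr lo c \<times> Tr c hi)" by (rule bij_betw_same_card)
  then show ?thesis by (simp add: card_cartesian_product)
qed

lemma Tr_split: assumes "lo + 2 \<le> hi" shows "Tr lo hi = (\<Union>c\<in>{lo<..<hi}. Tc lo hi c)"
proof
  show "Tr lo hi \<subseteq> (\<Union>c\<in>{lo<..<hi}. Tc lo hi c)"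
  proof
    fix T assume "T \<in> Tr lo hi"
    then have T: "tri lo hi T" unfolding Tr_def by simp
    then obtain c where c: "ap lo hi c T" using ap_ex[OF _ assms] by blast
    then have "c \<in> {lo<..<hi}" unfolding ap_def by simp
    then show "T \<in> (\<Union>c\<in>{lo<..<hi}. Tc lo hi c)" using T c unfolding Tc_def by blast
  qed
  show "(\<Union>c\<in>{lo<..<hi}. Tc lo hi c) \<subseteq> Tr lo hi" unfolding Tc_def Tr_def by blast
qed

lemma card_Tr_split: assumes "lo + 2 \<le> hi" shows "card (Tr lo hi) = (\<Sum>c\<in>{lo<..<hi}. card (Tc lo hi c))"
proof -
  have fin: "finite (Tc lo hi c)" for c
    by (rule finite_subset[OF _ fin_Tr[of lo hi]]) (auto simp: Tc_def Tr_def)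
  have dis: "\<forall>c\<in>{lo<..<hi}. \<forall>c'\<in>{lo<..<hi}. c \<noteq> c' \<longrightarrow> Tc lo hi c \<inter> Tc lo hi c' = {}"
    unfolding Tc_def using ap_uniq by blast
  show ?thesis unfolding Tr_split[OF assms] by (rule card_UN_disjoint) (use fin dis in auto)
qed

lemma Tr_base: "Tr lo (lo+1) = {{}}"
proof -
  have nd: "\<not> dg lo (lo+1) d" for d unfolding dg_def by auto
  have "tri lo (lo+1) T \<longleftrightarrow> T = {}" for T
  proof
    assume "tri lo (lo+1) T" then show "T = {}" using tri_dg nd by blast
  next
    assume "T = {}" then show "tri lo (lo+1) T" unfolding tri_def nc_def using nd by simp
  qed
  then show ?thesis unfolding Tr_def by auto
qed

lemma card_Tr: "lo < hi \<Longrightarrow> card (Tr lo hi) = catalan (hi - lo - 1)"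
proof (induction "hi - lo - 1" arbitrary: lo hi rule: less_induct)
  case less
  show ?case
  proof (cases "hi = lo + 1")
    case True then show ?thesis using Tr_base[of lo] by (simp add: catalan_def)
  next
    case False
    define p where "p = hi - lo - 2"
    have p: "hi - lo - 1 = Suc p" "lo + 2 \<le> hi" "hi = lo + p + 2" using less.prems False unfolding p_def by arith+
    have "card (Tr lo hi) = (\<Sum>c\<in>{lo<..<hi}. card (Tr lo c) * card (Tr c hi))"
      unfolding card_Tr_split[OF p(2)] by (rule sum.cong) (auto simp: card_Tc)
    also have "\<dots> = (\<Sum>c\<in>{lo<..<hi}. catalan (c - lo - 1) * catalan (hi - c - 1))"
      by (rule sum.cong) (use less in auto)
    also have "\<dots> = (\<Sum>i=0..p. catalan i * catalan (p - i))"
      by (rule sum.reindex_bij_witness[of _ "\<lambda>i. lo + 1 + i" "\<lambda>c. c - lo - 1"]) (use p in \<open>auto simp: add.commute\<close>)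
    also have "\<dots> = catalan (Suc p)" by (rule catalan_rec[symmetric])
    finally show ?thesis using p by simp
  qed
qed


lemma card_UTc: assumes "I \<subseteq> {lo<..<hi}" shows "card (\<Union>c\<in>I. Tc lo hi c) = (\<Sum>c\<in>I. card (Tc lo hi c))"
proof -
  have fin: "finite (Tc lo hi c)" for c
    by (rule finite_subset[OF _ fin_Tr[of lo hi]]) (auto simp: Tc_def Tr_def)
  have dis: "\<forall>c\<in>I. \<forall>c'\<in>I. c \<noteq> c' \<longrightarrow> Tc lo hi c \<inter> Tc lo hi c' = {}"
    unfolding Tc_def using ap_uniq by blast
  have "finite I" using assms finite_subset by blast
  then show ?thesis by (rule card_UN_disjoint) (use fin dis in auto)
qed

lemma count_last:
  assumes n: "n \<ge> 4" and m: "m \<le> n - 3"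
  shows "card {T. triangulation n T \<and> (\<forall>k\<in>{2..m+1}. {n-1, (n-1 + k) mod n} \<notin> T)}
         = (\<Sum>i = 0..n - 3 - m. catalan i * catalan (n - 3 - i))"
proof -
  define hi where "hi = n - 1"
  have hi: "hi \<ge> 3" "m + 2 \<le> hi" using n m unfolding hi_def by arith+
  have modk: "(n - 1 + k) mod n = k - 1" if "k \<in> {2..m+1}" for k
  proof -
    have a: "n - 1 + k = (k - 1) + n" using that n by auto
    have b: "k - 1 < n" using that m n by auto
    have "((k - 1) + n) mod n = (k - 1) mod n" by (rule mod_add_self2)
    then show ?thesis unfolding a using b by simp
  qed
  have e1: "{T. triangulation n T \<and> (\<forall>k\<in>{2..m+1}. {n-1, (n-1 + k) mod n} \<notin> T)}
        = {T. tri 0 hi T \<and> (\<forall>j\<in>{1..m}. {j, hi} \<notin> T)}"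
  proof -
    have "(\<forall>k\<in>{2..m+1}. {n-1, (n-1 + k) mod n} \<notin> T) \<longleftrightarrow> (\<forall>j\<in>{1..m}. {j, hi} \<notin> T)" for T
    proof
      assume h: "\<forall>k\<in>{2..m+1}. {n-1, (n-1 + k) mod n} \<notin> T"
      show "\<forall>j\<in>{1..m}. {j, hi} \<notin> T"
      proof
        fix j assume j: "j \<in> {1..m}"
        then have "j+1 \<in> {2..m+1}" by auto
        then have "{n-1, (n-1 + (j+1)) mod n} \<notin> T" using h by blast
        then show "{j, hi} \<notin> T" using modk[OF \<open>j+1 \<in> {2..m+1}\<close>] unfolding hi_def by (simp add: insert_commute)
      qed
    next
      assume h: "\<forall>j\<in>{1..m}. {j, hi} \<notin> T"
      show "\<forall>k\<in>{2..m+1}. {n-1, (n-1 + k) mod n} \<notin> T"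
      proof
        fix k assume k: "k \<in> {2..m+1}"
        then have "k - 1 \<in> {1..m}" by auto
        then have "{k-1, hi} \<notin> T" using h by blast
        then show "{n-1, (n-1 + k) mod n} \<notin> T" using modk[OF k] unfolding hi_def by (simp add: insert_commute)
      qed
    qed
    moreover have "triangulation n T \<longleftrightarrow> tri 0 hi T" for T unfolding hi_def using tri_conv n by simp
    ultimately show ?thesis by simp
  qed
  have e2: "{T. tri 0 hi T \<and> (\<forall>j\<in>{1..m}. {j, hi} \<notin> T)} = (\<Union>c\<in>{m+1..hi-1}. Tc 0 hi c)"
  proof
    show "{T. tri 0 hi T \<and> (\<forall>j\<in>{1..m}. {j, hi} \<notin> T)} \<subseteq> (\<Union>c\<in>{m+1..hi-1}. Tc 0 hi c)"
    proof
      fix T assume "T \<in> {T. tri 0 hi T \<and> (\<forall>j\<in>{1..m}. {j, hi} \<notin> T)}"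
      then have T: "tri 0 hi T" "\<forall>j\<in>{1..m}. {j, hi} \<notin> T" by auto
      obtain c where c: "ap 0 hi c T" using ap_ex[OF T(1)] hi by auto
      have c1: "0 < c" "c < hi" "A 0 hi c \<subseteq> T" using c unfolding ap_def by auto
      have "\<not> c \<le> m"
      proof
        assume "c \<le> m"
        then have "c+1 \<noteq> hi" "c \<in> {1..m}" using hi c1 by auto
        then show False using A_mem2[of c hi 0] c1 T(2) by blast
      qed
      then have "c \<in> {m+1..hi-1}" using c1 by auto
      then show "T \<in> (\<Union>c\<in>{m+1..hi-1}. Tc 0 hi c)" using T c unfolding Tc_def by blast
    qed
    show "(\<Union>c\<in>{m+1..hi-1}. Tc 0 hi c) \<subseteq> {T. tri 0 hi T \<and> (\<forall>j\<in>{1..m}. {j, hi} \<notin> T)}"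
    proof
      fix T assume "T \<in> (\<Union>c\<in>{m+1..hi-1}. Tc 0 hi c)"
      then obtain c where c: "c \<in> {m+1..hi-1}" "tri 0 hi T" "ap 0 hi c T" unfolding Tc_def by blast
      have c1: "0 < c" "c < hi" using c(3) unfolding ap_def by auto
      have "{j, hi} \<notin> T" if j: "j \<in> {1..m}" for j
      proof
        assume jT: "{j, hi} \<in> T"
        have jc: "j < c" using j c by auto
        consider "dg 0 c {j,hi}" | "dg c hi {j,hi}" | "{j,hi} \<in> A 0 hi c"
          using ap_elems[OF c(2,3) jT] by blast
        then show False
        proof cases
          case 1 then show False using dg_sub[OF 1] c1 by auto
        next
          case 2 then show False using dg_sub[OF 2] jc by auto
        next
          case 3 then show False
          proof (cases rule: AE)
            case 1 then show False using c1 by (auto simp: doubleton_eq_iff)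
          next
            case 2 then show False using c1 jc by (auto simp: doubleton_eq_iff)
          qed
        qed
      qed
      then show "T \<in> {T. tri 0 hi T \<and> (\<forall>j\<in>{1..m}. {j, hi} \<notin> T)}" using c by blast
    qed
  qed
  have "card {T. triangulation n T \<and> (\<forall>k\<in>{2..m+1}. {n-1, (n-1 + k) mod n} \<notin> T)}
      = (\<Sum>c\<in>{m+1..hi-1}. card (Tc 0 hi c))"
    unfolding e1 e2 by (rule card_UTc) auto
  also have "\<dots> = (\<Sum>c\<in>{m+1..hi-1}. catalan (c - 1) * catalan (hi - c - 1))"
    by (rule sum.cong) (auto simp: card_Tc card_Tr)
  also have "\<dots> = (\<Sum>i = 0..n - 3 - m. catalan (n - 3 - i) * catalan i)"
    by (rule sum.reindex_bij_witness[of _ "\<lambda>i. hi - 1 - i" "\<lambda>c. hi - 1 - c"]) (use hi in \<open>auto simp: hi_def\<close>)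
  also have "\<dots> = (\<Sum>i = 0..n - 3 - m. catalan i * catalan (n - 3 - i))" by (simp add: mult.commute)
  finally show ?thesis .
qed


definition rho :: "nat \<Rightarrow> nat \<Rightarrow> nat" where "rho n x = (if x + 1 = n then 0 else x + 1)"
definition sig :: "nat \<Rightarrow> nat \<Rightarrow> nat" where "sig n x = (if x = 0 then n - 1 else x - 1)"

lemma diag_sub: "is_diagonal n d \<Longrightarrow> d \<subseteq> {..<n}"
  unfolding is_diagonal_def by auto

lemma rho_sig: "x < n \<Longrightarrow> rho n (sig n x) = x" unfolding rho_def sig_def by auto
lemma sig_rho: "x < n \<Longrightarrow> sig n (rho n x) = x" unfolding rho_def sig_def by auto

lemma rho_diag: assumes "is_diagonal n d" "n \<ge> 4" shows "is_diagonal n (rho n ` d)"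
proof -
  obtain i j where d: "d = {i,j}" "i < j" "j < n" "j \<noteq> i+1" "\<not> (i = 0 \<and> j = n - 1)"
    using assms(1) unfolding is_diagonal_def by blast
  show ?thesis
  proof (cases "j = n - 1")
    case True
    then have "rho n ` d = {0, i+1}" using d unfolding rho_def by auto
    moreover have "0 < i+1" "i + 1 < n" "i+1 \<noteq> 1" "i+1 \<noteq> n-1" using d True assms(2) by auto
    ultimately show ?thesis unfolding is_diagonal_def by (intro exI[where x=0] exI[where x="i+1"]) simp
  next
    case False
    then have "rho n ` d = {i+1, j+1}" using d unfolding rho_def by auto
    moreover have "i+1 < j+1" "j+1 < n" "j+1 \<noteq> i+1+1" "\<not>(i + 1 = 0)" using d False by auto
    ultimately show ?thesis unfolding is_diagonal_def by (intro exI[where x="i+1"] exI[where x="j+1"]) simp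
  qed
qed

lemma sig_diag: assumes "is_diagonal n d" "n \<ge> 4" shows "is_diagonal n (sig n ` d)"
proof -
  obtain i j where d: "d = {i,j}" "i < j" "j < n" "j \<noteq> i+1" "\<not> (i = 0 \<and> j = n - 1)"
    using assms(1) unfolding is_diagonal_def by blast
  show ?thesis
  proof (cases "i = 0")
    case True
    then have "sig n ` d = {j - 1, n - 1}" using d unfolding sig_def by auto
    moreover have "j - 1 < n - 1" "n - 1 < n" "n - 1 \<noteq> j - 1 + 1" "\<not>(j - 1 = 0 \<and> n - 1 = n - 1)" using d True assms(2) by auto
    ultimately show ?thesis unfolding is_diagonal_def by (intro exI[where x="j-1"] exI[where x="n-1"]) simp
  next
    case False
    then have "sig n ` d = {i - 1, j - 1}" using d unfolding sig_def by auto
    moreover have "i - 1 < j - 1" "j - 1 < n" "j - 1 \<noteq> i - 1 + 1" "\<not>(i - 1 = 0 \<and> j - 1 = n - 1)" using d False by auto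
    ultimately show ?thesis unfolding is_diagonal_def by (intro exI[where x="i-1"] exI[where x="j-1"]) simp
  qed
qed

lemma rho_cross: assumes "is_diagonal n d" "is_diagonal n e"
  shows "crossing (rho n ` d) (rho n ` e) = crossing d e"
proof -
  obtain i j where d: "d = {i,j}" "i < j" "j < n"
    using assms(1) unfolding is_diagonal_def by blast
  obtain k l where e: "e = {k,l}" "k < l" "l < n"
    using assms(2) unfolding is_diagonal_def by blast
  have ri: "rho n i = i + 1" "rho n k = k + 1" using d e unfolding rho_def by auto
  have im: "rho n ` d = {rho n i, rho n j}" "rho n ` e = {rho n k, rho n l}" using d e by simp_all
  have sw: "{x, 0} = {0, x}" for x :: nat by blast
  consider "j = n - 1" "l = n - 1" | "j = n - 1" "l \<noteq> n - 1" | "j \<noteq> n - 1" "l = n - 1" | "j \<noteq> n - 1" "l \<noteq> n - 1"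
    by blast
  then show ?thesis
  proof cases
    case 1
    then have "rho n j = 0" "rho n l = 0" using d e unfolding rho_def by auto
    then have "rho n ` d = {0, i+1}" "rho n ` e = {0, k+1}" unfolding im ri by auto
    moreover have "\<not> crossing {0, i+1} {0, k+1}" by (simp add: cross_iff)
    moreover have "\<not> crossing d e" unfolding d e using d e 1 by (simp add: cross_iff)
    ultimately show ?thesis by simp
  next
    case 2
    then have "rho n j = 0" "rho n l = l + 1" using d e unfolding rho_def by auto
    then have x: "rho n ` d = {0, i+1}" "rho n ` e = {k+1, l+1}" unfolding im ri by auto
    have y: "l < j" using 2 d e by simp
    have "crossing {0, i+1} {k+1, l+1} \<longleftrightarrow> k < i \<and> i < l" using e by (simp add: cross_iff)
    moreover have "crossing {i,j} {k,l} \<longleftrightarrow> k < i \<and> i < l" using d e y by (simp add: cross_iff)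
    ultimately show ?thesis unfolding x by (simp add: d(1) e(1))
  next
    case 3
    then have "rho n j = j + 1" "rho n l = 0" using d e unfolding rho_def by auto
    then have x: "rho n ` d = {i+1, j+1}" "rho n ` e = {0, k+1}" unfolding im ri by auto
    have y: "j < l" using 3 d e by simp
    have "crossing {i+1, j+1} {0, k+1} \<longleftrightarrow> i < k \<and> k < j" using d by (simp add: cross_iff)
    moreover have "crossing {i,j} {k,l} \<longleftrightarrow> i < k \<and> k < j" using d e y by (simp add: cross_iff)
    ultimately show ?thesis unfolding x by (simp add: d(1) e(1))
  next
    case 4
    then have "rho n j = j + 1" "rho n l = l + 1" using d e unfolding rho_def by auto
    then have x: "rho n ` d = {i+1, j+1}" "rho n ` e = {k+1, l+1}" unfolding im ri by simp_all
    show ?thesis unfolding x using d e by (simp add: cross_iff)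
  qed
qed

lemma sig_cross: assumes "is_diagonal n d" "is_diagonal n e" "n \<ge> 4"
  shows "crossing (sig n ` d) (sig n ` e) = crossing d e"
proof -
  have a: "rho n ` sig n ` x = x" if "is_diagonal n x" for x
  proof -
    have "x \<subseteq> {..<n}" using diag_sub[OF that] .
    then have "\<forall>y\<in>x. rho n (sig n y) = y" using rho_sig by blast
    then show ?thesis by (simp add: image_image)
  qed
  have "crossing (rho n ` sig n ` d) (rho n ` sig n ` e) = crossing (sig n ` d) (sig n ` e)"
    by (rule rho_cross[OF sig_diag[OF assms(1,3)] sig_diag[OF assms(2,3)]])
  then show ?thesis unfolding a[OF assms(1)] a[OF assms(2)] by simp
qed

lemma tri_char: "triangulation n T \<longleftrightarrow> (\<forall>d\<in>T. is_diagonal n d) \<and> (\<forall>d\<in>T. \<forall>e\<in>T. \<not> crossing d e)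
   \<and> (\<forall>d. is_diagonal n d \<and> d \<notin> T \<longrightarrow> (\<exists>e\<in>T. crossing d e))"
  unfolding triangulation_def noncrossing_def using cross_sym cross_irrefl by auto

lemma tri_map:
  assumes fd: "\<And>d. is_diagonal n d \<Longrightarrow> is_diagonal n (F ` d)"
    and gd: "\<And>d. is_diagonal n d \<Longrightarrow> is_diagonal n (G ` d)"
    and fg: "\<And>x. x < n \<Longrightarrow> F (G x) = x"
    and fc: "\<And>d e. is_diagonal n d \<Longrightarrow> is_diagonal n e \<Longrightarrow> crossing (F ` d) (F ` e) = crossing d e"
    and T: "triangulation n T"
  shows "triangulation n ((\<lambda>d. F ` d) ` T)"
proof -
  have T1: "\<forall>d\<in>T. is_diagonal n d" "\<forall>d\<in>T. \<forall>e\<in>T. \<not> crossing d e"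
    "\<And>d. is_diagonal n d \<Longrightarrow> d \<notin> T \<Longrightarrow> \<exists>e\<in>T. crossing d e"
    using T unfolding tri_char by blast+
  have "\<exists>e\<in>(\<lambda>d. F ` d) ` T. crossing d' e" if d': "is_diagonal n d'" "d' \<notin> (\<lambda>d. F ` d) ` T" for d'
  proof -
    define d where "d = G ` d'"
    have dd: "is_diagonal n d" unfolding d_def by (rule gd[OF d'(1)])
    have fdd: "F ` d = d'" unfolding d_def using diag_sub[OF d'(1)] fg by (force simp: image_image)
    have "d \<notin> T" using d'(2) fdd by blast
    then obtain e where e: "e \<in> T" "crossing d e" using T1(3)[OF dd] by blast
    have "crossing d' (F ` e)" using fc[OF dd] T1(1) e fdd by simp
    then show ?thesis using e(1) by blast
  qed
  moreover have "\<forall>d\<in>(\<lambda>d. F ` d) ` T. is_diagonal n d" using T1(1) fd by blast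
  moreover have "\<forall>d\<in>(\<lambda>d. F ` d) ` T. \<forall>e\<in>(\<lambda>d. F ` d) ` T. \<not> crossing d e"
    using T1(1,2) fc by auto
  ultimately show ?thesis unfolding tri_char by blast
qed

lemma back_map:
  assumes gf: "\<And>x. x < n \<Longrightarrow> G (F x) = x" and T: "triangulation n T"
  shows "(\<lambda>d. G ` d) ` (\<lambda>d. F ` d) ` T = T"
proof -
  have "G ` F ` d = d" if "d \<in> T" for d
  proof -
    have "d \<subseteq> {..<n}" using T that diag_sub unfolding tri_char by blast
    then show ?thesis using gf by (force simp: image_image)
  qed
  then show ?thesis by (simp add: image_image)
qed

definition Sa :: "nat \<Rightarrow> nat \<Rightarrow> nat \<Rightarrow> nat set set set" where
  "Sa n m a = {T. triangulation n T \<and> (\<forall>k\<in>{2..m+1}. {a, (a + k) mod n} \<notin> T)}"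

lemma rho_mod: "x < n \<Longrightarrow> rho n x = (x + 1) mod n"
  unfolding rho_def by auto

lemma count_rot: assumes n: "n \<ge> 4" and a: "a < n"
  shows "card (Sa n m a) = card (Sa n m ((a + 1) mod n))"
proof -
  let ?a = "(a + 1) mod n"
  define P where "P = (\<lambda>T. (\<lambda>d. rho n ` d) ` T)"
  define Q where "Q = (\<lambda>T. (\<lambda>d. sig n ` d) ` T)"
  have trP: "triangulation n (P T)" if "triangulation n T" for T
    unfolding P_def by (rule tri_map[OF rho_diag[OF _ n] sig_diag[OF _ n] rho_sig rho_cross that])
  have trQ: "triangulation n (Q T)" if "triangulation n T" for T
    unfolding Q_def by (rule tri_map[OF sig_diag[OF _ n] rho_diag[OF _ n] sig_rho sig_cross[OF _ _ n] that])
  have QP: "Q (P T) = T" if "triangulation n T" for T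
    unfolding P_def Q_def by (rule back_map[where G="sig n" and F="rho n", OF sig_rho that])
  have PQ: "P (Q T) = T" if "triangulation n T" for T
    unfolding P_def Q_def by (rule back_map[where G="rho n" and F="sig n", OF rho_sig that])
  have forb: "rho n ` {a, (a + k) mod n} = {?a, (?a + k) mod n}" for k
  proof -
    have "rho n a = ?a" using a by (simp add: rho_mod)
    moreover have "rho n ((a + k) mod n) = (?a + k) mod n"
    proof -
      have "rho n ((a + k) mod n) = ((a + k) mod n + 1) mod n" using a by (simp add: rho_mod)
      also have "\<dots> = (a + k + 1) mod n" by (rule mod_add_left_eq)
      also have "\<dots> = (a + 1 + k) mod n" by (simp add: algebra_simps)
      also have "\<dots> = (?a + k) mod n" by (rule mod_add_left_eq[symmetric])
      finally show ?thesis .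
    qed
    ultimately show ?thesis by simp
  qed
  have forb': "sig n ` {?a, (?a + k) mod n} = {a, (a + k) mod n}" for k
  proof -
    have "sig n ` rho n ` {a, (a + k) mod n} = {a, (a + k) mod n}"
      using a n sig_rho by (simp add: sig_rho)
    moreover have "sig n ` {?a, (?a + k) mod n} = sig n ` rho n ` {a, (a + k) mod n}"
      by (simp only: forb)
    ultimately show ?thesis by simp
  qed
  have "bij_betw P (Sa n m a) (Sa n m ?a)"
  proof (rule bij_betw_byWitness[where f'=Q])
    show "\<forall>T\<in>Sa n m a. Q (P T) = T" unfolding Sa_def using QP by blast
    show "\<forall>T\<in>Sa n m ?a. P (Q T) = T" unfolding Sa_def using PQ by blast
    show "P ` Sa n m a \<subseteq> Sa n m ?a"
    proof
      fix X assume "X \<in> P ` Sa n m a"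
      then obtain T where T: "X = P T" "triangulation n T" "\<forall>k\<in>{2..m+1}. {a, (a + k) mod n} \<notin> T"
        unfolding Sa_def by blast
      have "{?a, (?a + k) mod n} \<notin> P T" if "k \<in> {2..m+1}" for k
      proof
        assume "{?a, (?a + k) mod n} \<in> P T"
        then have "sig n ` {?a, (?a + k) mod n} \<in> Q (P T)" unfolding Q_def by blast
        then show False using QP[OF T(2)] forb' T(3) that by simp
      qed
      then show "X \<in> Sa n m ?a" unfolding Sa_def using T trP by blast
    qed
    show "Q ` Sa n m ?a \<subseteq> Sa n m a"
    proof
      fix X assume "X \<in> Q ` Sa n m ?a"
      then obtain T where T: "X = Q T" "triangulation n T" "\<forall>k\<in>{2..m+1}. {?a, (?a + k) mod n} \<notin> T"
        unfolding Sa_def by blast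
      have "{a, (a + k) mod n} \<notin> Q T" if "k \<in> {2..m+1}" for k
      proof
        assume "{a, (a + k) mod n} \<in> Q T"
        then have "rho n ` {a, (a + k) mod n} \<in> P (Q T)" unfolding P_def by blast
        then show False using PQ[OF T(2)] forb T(3) that by simp
      qed
      then show "X \<in> Sa n m a" unfolding Sa_def using T trQ by blast
    qed
  qed
  then show ?thesis by (rule bij_betw_same_card)
qed

lemma count_all: assumes n: "n \<ge> 4" and a: "a < n" shows "card (Sa n m a) = card (Sa n m (n - 1))"
  using a
proof (induction "n - 1 - a" arbitrary: a)
  case 0 then have "a = n - 1" by simp
  then show ?case by simp
next
  case (Suc x)
  then have a1: "a + 1 < n" "x = n - 1 - (a + 1)" by arith+
  have "(a + 1) mod n = a + 1" using a1 by simp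
  then have "card (Sa n m a) = card (Sa n m (a+1))" using count_rot[OF n Suc.prems] by simp
  also have "\<dots> = card (Sa n m (n - 1))" using Suc.hyps(1)[OF a1(2) a1(1)] .
  finally show ?case .
qed

theorem lemma3p4:
  fixes n a m :: nat
  assumes "n \<ge> 4" and "a < n" and "m \<le> n - 3"
  shows "card {T. triangulation n T \<and> (\<forall>k\<in>{2..m+1}. {a, (a + k) mod n} \<notin> T)}
         = (\<Sum>i = 0..n - 3 - m. catalan i * catalan (n - 3 - i))"
proof -
  have "card {T. triangulation n T \<and> (\<forall>k\<in>{2..m+1}. {a, (a + k) mod n} \<notin> T)} = card (Sa n m a)"
    unfolding Sa_def ..
  also have "\<dots> = card (Sa n m (n - 1))" by (rule count_all[OF assms(1,2)])
  also have "\<dots> = (\<Sum>i = 0..n - 3 - m. catalan i * catalan (n - 3 - i))"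
    unfolding Sa_def by (rule count_last[OF assms(1,3)])
  finally show ?thesis .
qed

end
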